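(* Let $G=(V,E)$ be an unweighted graph with $n$ vertices, and let $e\in E$. Then $$ B_e^{2}\leq n. $$
   Context: $L=D-A$ is the Laplacian of the unweighted graph $G$, $L^{+}$ its Moore–Penrose pseudoinverse, $L^{2+}=(L^+)^2$, and $1_v$ the indicator vector of vertex $v$. The biharmonic distance is $B_{st}=\sqrt{(1_s-1_t)^{T}L^{2+}(1_s-1_t)}$, and $B_e:=B_{st}$ for an edge $e=\{s,t\}$. *)

theory Defs
  imports "HOL-Analysis.Analysis"
begin

definition simple_graph :: "('n::finite \<Rightarrow> 'n \<Rightarrow> bool) \<Rightarrow> bool" where
  "simple_graph E \<longleftrightarrow> (\<forall>u v. E u v \<longrightarrow> E v u) \<and> (\<forall>u. \<not> E u u)"

definition laplacian :: "('n::finite \<Rightarrow> 'n \<Rightarrow> bool) \<Rightarrow> real^'n^'n" where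
  "laplacian E = (\<chi> i j. (if i = j then real (card {k. E i k}) else 0)
                         - (if E i j then 1 else 0))"

definition pinv :: "real^'n::finite^'n \<Rightarrow> real^'n^'n" where
  "pinv A = (THE X. A ** X ** A = A \<and> X ** A ** X = X \<and>
                    transpose (A ** X) = A ** X \<and> transpose (X ** A) = X ** A)"

definition indic :: "'n::finite \<Rightarrow> real^'n" where
  "indic v = (\<chi> i. if i = v then 1 else 0)"

definition biharmonic_dist :: "('n::finite \<Rightarrow> 'n \<Rightarrow> bool) \<Rightarrow> 'n \<Rightarrow> 'n \<Rightarrow> real" where
  "biharmonic_dist E s t =
     (let L2 = pinv (laplacian E) ** pinv (laplacian E); x = indic s - indic t
      in sqrt (x \<bullet> (L2 *v x)))"

end

theory Submission
  imports Defs
begin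

definition pen :: "real^'n::finite^'n \<Rightarrow> real^'n^'n \<Rightarrow> bool" where
  "pen A X \<longleftrightarrow> A ** X ** A = A \<and> X ** A ** X = X \<and>
                    transpose (A ** X) = A ** X \<and> transpose (X ** A) = X ** A"

lemma pen_unique:
  assumes "pen A X" "pen A Y" shows "X = Y"
proof -
  have a1: "A ** X ** A = A" "X ** A ** X = X" "transpose (A ** X) = A ** X" "transpose (X ** A) = X ** A"
    using assms(1) by (auto simp: pen_def)
  have b1: "A ** Y ** A = A" "Y ** A ** Y = Y" "transpose (A ** Y) = A ** Y" "transpose (Y ** A) = Y ** A"
    using assms(2) by (auto simp: pen_def)
  have "X = X ** (A ** X)" using a1 by (simp add: matrix_mul_assoc)
  also have "\<dots> = X ** (transpose X ** transpose A)" using a1 by (metis matrix_transpose_mul)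
  also have "transpose A = transpose A ** transpose Y ** transpose A"
    using b1 by (metis matrix_transpose_mul matrix_mul_assoc)
  also have "X ** (transpose X ** (transpose A ** transpose Y ** transpose A))
     = X ** (transpose (A ** X) ** transpose (A ** Y))"
    by (simp add: matrix_transpose_mul matrix_mul_assoc)
  also have "\<dots> = X ** A ** X ** A ** Y" using a1 b1 by (simp add: matrix_mul_assoc)
  also have "\<dots> = X ** A ** Y" using a1 by simp
  finally have hx: "X = X ** A ** Y" .
  have "Y = (Y ** A) ** Y" using b1 by simp
  also have "\<dots> = (transpose A ** transpose Y) ** Y" using b1 by (metis matrix_transpose_mul)
  also have "transpose A = transpose A ** transpose X ** transpose A"
    using a1 by (metis matrix_transpose_mul matrix_mul_assoc)
  also have "(transpose A ** transpose X ** transpose A ** transpose Y) ** Y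
     = (transpose (X ** A) ** transpose (Y ** A)) ** Y"
    by (simp add: matrix_transpose_mul matrix_mul_assoc)
  also have "\<dots> = X ** A ** Y ** A ** Y" using a1(4) b1(4) by (simp add: matrix_mul_assoc)
  also have "\<dots> = X ** A ** Y" using b1(2) by (metis matrix_mul_assoc)
  finally show ?thesis using hx by simp
qed

lemma pinv_eq: "pen A X \<Longrightarrow> pinv A = X"
  unfolding pinv_def using pen_unique unfolding pen_def by blast

lemma sym_inner: "transpose A = A \<Longrightarrow> (A *v u) \<bullet> v = u \<bullet> (A *v (v::real^'n))"
  by (metis dot_lmul_matrix transpose_matrix_vector)

lemma transpose_diff: "transpose (A - B) = transpose A - transpose (B::real^'n^'m)"
  by (simp add: transpose_def vec_eq_iff)

lemma mdiff_l: "(A::real^'n^'m) ** (B - C) = A ** B - A ** C"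
  by (simp add: matrix_matrix_mult_def vec_eq_iff sum_subtractf algebra_simps)
lemma mdiff_r: "(B - C) ** (A::real^'n^'m) = B ** A - C ** A"
  by (simp add: matrix_matrix_mult_def vec_eq_iff sum_subtractf algebra_simps)
lemma madd_r: "(B + C) ** (A::real^'n^'m) = B ** A + C ** A"
  by (simp add: matrix_matrix_mult_def vec_eq_iff sum.distrib algebra_simps)

lemma pen_exists:
  fixes A :: "real^'n::finite^'n"
  assumes symA: "transpose A = A"
  shows "\<exists>X. pen A X"
proof -
  define K where "K = {z. A *v z = 0}"
  have "subspace K" unfolding K_def
    by (auto simp: subspace_def algebra_simps)
  then obtain B where B: "B \<subseteq> K" "pairwise orthogonal B" "\<And>x. x \<in> B \<Longrightarrow> norm x = 1"
     "independent B" "span B = K"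
    by (rule orthonormal_basis_subspace) blast
  have finB: "finite B" using B(4) independent_imp_finite by blast
  define J :: "real^'n^'n" where "J = (\<chi> i j. \<Sum>b\<in>B. b$i * b$j)"
  have Jv: "J *v x = (\<Sum>b\<in>B. (b \<bullet> x) *\<^sub>R b)" for x
    by (simp add: vec_eq_iff J_def matrix_vector_mult_def inner_vec_def sum_component
        sum_distrib_left sum_distrib_right mult_ac sum.swap[of _ B])
  have JK: "J *v x \<in> K" for x
    unfolding Jv B(5)[symmetric] by (intro span_sum span_mul span_base) auto
  have bb: "b \<bullet> b = 1" if "b \<in> B" for b
    using B(3)[OF that] by (simp add: norm_eq_1)
  have orthB: "b \<bullet> (x - J *v x) = 0" if "b \<in> B" for b x
  proof -
    have "b \<bullet> (J *v x) = (\<Sum>c\<in>B. (c \<bullet> x) * (b \<bullet> c))"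
      by (simp add: Jv inner_sum_right)
    also have "\<dots> = (\<Sum>c\<in>B. if c = b then b \<bullet> x else 0)"
      using B(2) that bb by (intro sum.cong refl) (auto simp: pairwise_def orthogonal_def)
    also have "\<dots> = b \<bullet> x" using that finB by simp
    finally show ?thesis by (simp add: inner_diff_right)
  qed
  have orthK: "z \<bullet> (x - J *v x) = 0" if "z \<in> K" for z x
    using orthogonal_to_span[of z B "x - J *v x"] that B(5) orthB
    by (simp add: orthogonal_def inner_commute)
  have Jid: "J *v z = z" if "z \<in> K" for z
  proof -
    have "z - J *v z \<in> K" using that JK \<open>subspace K\<close> by (simp add: subspace_diff)
    then have "(z - J *v z) \<bullet> (z - J *v z) = 0" using orthK by blast
    then show ?thesis by simp
  qed
  have symJ: "transpose J = J" by (simp add: J_def transpose_def vec_eq_iff mult.commute)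
  have AJ: "A ** J = 0"
    using JK unfolding K_def by (simp add: matrix_eq flip: matrix_vector_mul_assoc)
  have JA: "J ** A = 0"
    by (metis AJ matrix_transpose_mul symA symJ transpose_iff transpose_mat mat_0)
  have JJ: "J ** J = J"
    by (simp add: matrix_eq Jid JK flip: matrix_vector_mul_assoc)
  define M where "M = A + J"
  have inj: "v = 0" if "M *v v = 0" for v
  proof -
    have "A *v (J *v v) = 0" using JK K_def by blast
    then have "(J *v v) \<bullet> (A *v v) = 0" using sym_inner[OF symA, of "J *v v" v] by simp
    moreover have "(J *v v) \<bullet> (A *v v + J *v v) = 0" using that
      by (simp add: M_def matrix_vector_mult_add_rdistrib)
    ultimately have "(J *v v) \<bullet> (J *v v) = 0" by (simp add: inner_add_right)
    then have Jv0: "J *v v = 0" by simp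
    then have "A *v v = 0" using that by (simp add: M_def matrix_vector_mult_add_rdistrib)
    then have "v \<in> K" by (simp add: K_def)
    then show ?thesis using Jid Jv0 by simp
  qed
  then obtain N where NM: "N ** M = mat 1" using matrix_left_invertible_ker by blast
  then have MN: "M ** N = mat 1" using matrix_left_right_inverse by blast
  have NJ: "N ** J = J"
  proof -
    have "M ** J = J" using AJ JJ
      by (simp add: M_def matrix_eq matrix_vector_mult_add_rdistrib flip: matrix_vector_mul_assoc)
    then show ?thesis using NM by (metis matrix_mul_assoc matrix_mul_lid)
  qed
  have JN: "J ** N = J"
  proof -
    have "J ** M = J" by (simp add: M_def matrix_add_ldistrib JA JJ)
    then show ?thesis using MN by (metis matrix_mul_assoc matrix_mul_rid)
  qed
  have AeqM: "A = M - J" by (simp add: M_def)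
  define X where "X = N - J"
  have AX: "A ** X = mat 1 - J"
    unfolding X_def mdiff_l AJ by (simp add: AeqM mdiff_r MN JN)
  have XA: "X ** A = mat 1 - J"
    unfolding X_def mdiff_r JA by (simp add: AeqM mdiff_l NM NJ)
  have "pen A X"
    unfolding pen_def
  proof (intro conjI)
    show "A ** X ** A = A" unfolding AX mdiff_r JA by simp
    show "X ** A ** X = X" unfolding XA mdiff_r by (simp add: X_def mdiff_l JN JJ)
    show "transpose (A ** X) = A ** X" unfolding AX transpose_diff symJ by simp
    show "transpose (X ** A) = X ** A" unfolding XA transpose_diff symJ by simp
  qed
  then show ?thesis by blast
qed

lemma lap_mv:
  "(laplacian E *v z) $ u = (\<Sum>v\<in>UNIV. if E u v then z$u - z$v else 0)"
proof -
  have "(laplacian E *v z) $ u = (\<Sum>v\<in>UNIV. (if u = v then real (card {k. E u k}) else 0) * z$v)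
          - (\<Sum>v\<in>UNIV. (if E u v then 1 else 0) * z$v)"
    by (simp add: matrix_vector_mult_def laplacian_def left_diff_distrib sum_subtractf)
  also have "(\<Sum>v\<in>UNIV. (if u = v then real (card {k. E u k}) else 0) * z$v) = real (card {k. E u k}) * z$u"
    by (simp add: if_distrib[where f="\<lambda>x. x * _"] cong: if_cong)
  also have "real (card {k. E u k}) * z$u = (\<Sum>v\<in>UNIV. if E u v then z$u else 0)"
    by (simp add: sum.If_cases)
  also have "(\<Sum>v\<in>UNIV. (if E u v then 1 else 0) * z$v) = (\<Sum>v\<in>UNIV. if E u v then z$v else 0)"
    by (intro sum.cong) auto
  finally show ?thesis by (simp add: sum_subtractf[symmetric] if_distrib cong: if_cong) 
qed

lemma lap_sym: "simple_graph E \<Longrightarrow> transpose (laplacian E) = laplacian E"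
  by (auto simp: simple_graph_def transpose_def laplacian_def vec_eq_iff)

lemma quad:
  assumes "simple_graph E"
  shows "z \<bullet> (laplacian E *v z) = (\<Sum>u\<in>UNIV. \<Sum>v\<in>UNIV. if E u v then (z$u - z$v)^2 else 0) / 2"
proof -
  have sy: "E u v = E v u" for u v using assms by (auto simp: simple_graph_def)
  have "z \<bullet> (laplacian E *v z) = (\<Sum>u\<in>UNIV. \<Sum>v\<in>UNIV. if E u v then z$u * z$u - z$u * z$v else 0)"
    by (simp add: inner_vec_def lap_mv sum_distrib_left if_distrib right_diff_distrib cong: if_cong)
  also have "\<dots> = (\<Sum>v\<in>UNIV. \<Sum>u\<in>UNIV. if E u v then z$u * z$u - z$u * z$v else 0)"
    by (rule sum.swap)
  also have "\<dots> = (\<Sum>u\<in>UNIV. \<Sum>v\<in>UNIV. if E u v then z$v * z$v - z$v * z$u else 0)"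
    using sy by simp
  finally have h: "z \<bullet> (laplacian E *v z) = (\<Sum>u\<in>UNIV. \<Sum>v\<in>UNIV. if E u v then z$v * z$v - z$v * z$u else 0)" .
  have h2: "z \<bullet> (laplacian E *v z) = (\<Sum>u\<in>UNIV. \<Sum>v\<in>UNIV. if E u v then z$u * z$u - z$u * z$v else 0)"
    by (simp add: inner_vec_def lap_mv sum_distrib_left if_distrib right_diff_distrib cong: if_cong)
  have "2 * (z \<bullet> (laplacian E *v z)) = (\<Sum>u\<in>UNIV. \<Sum>v\<in>UNIV. (if E u v then z$u * z$u - z$u * z$v else 0)
       + (if E u v then z$v * z$v - z$v * z$u else 0))"
    using h h2 by (simp add: sum.distrib)
  also have "\<dots> = (\<Sum>u\<in>UNIV. \<Sum>v\<in>UNIV. if E u v then (z$u - z$v)^2 else 0)"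
    by (intro sum.cong refl) (auto simp: power2_eq_square algebra_simps)
  finally show ?thesis by simp
qed

lemma quad_nonneg: "simple_graph E \<Longrightarrow> 0 \<le> z \<bullet> (laplacian E *v z)"
  by (simp add: quad sum_nonneg)

lemma quad_zero:
  assumes "simple_graph E" "z \<bullet> (laplacian E *v z) = 0"
  shows "laplacian E *v z = 0"
proof -
  have "(\<Sum>u\<in>UNIV. \<Sum>v\<in>UNIV. if E u v then (z$u - z$v)^2 else 0) = 0"
    using assms(2) quad[OF assms(1), of z] by simp
  then have "\<forall>u. (\<Sum>v\<in>UNIV. if E u v then (z$u - z$v)^2 else 0) = 0"
    by (subst (asm) sum_nonneg_eq_0_iff) (auto intro: sum_nonneg)
  then have h0: "\<forall>u v. (if E u v then (z$u - z$v)^2 else 0) = 0"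
    by (subst (asm) sum_nonneg_eq_0_iff) auto
  have "\<forall>u v. E u v \<longrightarrow> z$u = z$v"
  proof (intro allI impI)
    fix u v assume "E u v"
    then have "(z$u - z$v)^2 = 0" using h0 by metis
    then show "z$u = z$v" by simp
  qed
  then show ?thesis by (simp add: vec_eq_iff lap_mv cong: if_cong)
qed

lemma ker_edge:
  assumes "simple_graph E" "laplacian E *v z = 0" "E s t"
  shows "z$s = z$t"
proof -
  have "(\<Sum>u\<in>UNIV. \<Sum>v\<in>UNIV. if E u v then (z$u - z$v)^2 else 0) = 0"
    using assms quad[OF assms(1), of z] by simp
  then have "\<forall>u. (\<Sum>v\<in>UNIV. if E u v then (z$u - z$v)^2 else 0) = 0"
    by (subst (asm) sum_nonneg_eq_0_iff) (auto intro: sum_nonneg)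
  then have h0: "\<forall>u v. (if E u v then (z$u - z$v)^2 else 0) = 0"
    by (subst (asm) sum_nonneg_eq_0_iff) auto
  have "\<forall>u v. E u v \<longrightarrow> z$u = z$v"
  proof (intro allI impI)
    fix u v assume "E u v"
    then have "(z$u - z$v)^2 = 0" using h0 by metis
    then show "z$u = z$v" by simp
  qed
  then show ?thesis using assms by blast
qed

lemma quad_edge:
  assumes "simple_graph E" "E s t"
  shows "(z$s - z$t)^2 \<le> z \<bullet> (laplacian E *v z)"
proof -
  define g where "g u = (\<Sum>v\<in>UNIV. if E u v then (z$u - z$v)^2 else 0)" for u
  have st: "s \<noteq> t" using assms by (auto simp: simple_graph_def)
  have ts: "E t s" using assms by (auto simp: simple_graph_def)
  have g0: "0 \<le> g u" for u by (simp add: g_def sum_nonneg)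
  have "g s \<ge> (z$s - z$t)^2"
    unfolding g_def using member_le_sum[of t UNIV "\<lambda>v. if E s v then (z$s - z$v)^2 else 0"] assms
    by simp
  moreover have "g t \<ge> (z$s - z$t)^2"
    unfolding g_def using member_le_sum[of s UNIV "\<lambda>v. if E t v then (z$t - z$v)^2 else 0"] ts
    by (simp add: power2_commute)
  moreover have "g s + g t \<le> sum g UNIV"
    using sum_mono2[of UNIV "{s,t}" g] g0 st by simp
  ultimately show ?thesis using quad[OF assms(1), of z] by (simp add: g_def)
qed

lemma clip_le:
  assumes "a \<le> b"
  shows "(min (max p a) b - min (max q a) b)^2 \<le> ((p::real) - q)^2"
proof -
  have "\<bar>min (max p a) b - min (max q a) b\<bar> \<le> \<bar>p - q\<bar>" using assms
    by (simp add: min_def max_def abs_if)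
  then show ?thesis by (metis abs_ge_zero power2_abs power_mono)
qed


lemma indic_inner: "indic s \<bullet> v = v$s"
  by (simp add: indic_def inner_vec_def if_distrib[where f="\<lambda>x. x * _"] cong: if_cong)

theorem theoremA3:
  fixes E :: "'n::finite \<Rightarrow> 'n \<Rightarrow> bool" and s t :: 'n
  assumes "simple_graph E" and "E s t"
  shows "(biharmonic_dist E s t)\<^sup>2 \<le> real CARD('n)"
proof -
  note G = assms(1)
  define L where "L = laplacian E"
  have symL: "transpose L = L" using lap_sym[OF G] L_def by simp
  define X where "X = pinv L"
  define x where "x = indic s - indic t"
  have xv: "x \<bullet> v = v$s - v$t" for v by (simp add: x_def inner_diff_left indic_inner)
  obtain X0 where "pen L X0" using pen_exists[OF symL] by blast
  then have penX: "pen L X" using pinv_eq X_def by metis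
  then have P: "L ** X ** L = L" "X ** L ** X = X" "transpose (L ** X) = L ** X" "transpose (X ** L) = X ** L"
    by (auto simp: pen_def)
  have "pen L (transpose X)" unfolding pen_def
    using P symL by (metis matrix_transpose_mul matrix_mul_assoc transpose_transpose)
  then have symX: "transpose X = X" using pen_unique penX by blast
  have LX: "L ** X = X ** L" using P(3) symL symX by (metis matrix_transpose_mul)
  define y where "y = X *v x"
  have B2: "(biharmonic_dist E s t)\<^sup>2 = y \<bullet> y"
  proof -
    have "x \<bullet> ((X ** X) *v x) = y \<bullet> y"
      unfolding y_def
      by (metis dot_lmul_matrix matrix_vector_mul_assoc symX transpose_matrix_vector)
    then show ?thesis
      by (simp add: biharmonic_dist_def Let_def X_def[symmetric] L_def[symmetric] x_def[symmetric])
  qed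
  have Ly: "L *v y = x"
  proof -
    define z where "z = x - L *v y"
    have "L ** (L ** X) = L" using P(1) LX by (metis matrix_mul_assoc)
    then have "L *v z = 0" unfolding z_def y_def
      by (simp add: matrix_vector_mult_diff_distrib matrix_vector_mul_assoc)
    then have "z$s = z$t" using ker_edge[OF G _ assms(2)] L_def by blast
    then have xz: "x \<bullet> z = 0" by (simp add: xv)
    have "(L *v y) \<bullet> z = 0" using sym_inner[OF symL] \<open>L *v z = 0\<close> by simp
    then have "z \<bullet> z = 0" using xz by (simp add: z_def inner_diff_left)
    then show ?thesis by (simp add: z_def)
  qed
  have orth: "y \<bullet> z = 0" if "L *v z = 0" for z
  proof -
    have "X = L ** (X ** X)" using P(2) LX by (metis matrix_mul_assoc)
    then have "y = L *v ((X ** X) *v x)" unfolding y_def by (metis matrix_vector_mul_assoc)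
    then show ?thesis using sym_inner[OF symL] that by simp
  qed
  define Q where "Q v = v \<bullet> (L *v v)" for v
  have Qnn: "0 \<le> Q v" for v unfolding Q_def L_def by (rule quad_nonneg[OF G])
  define R where "R = y$s - y$t"
  have QyR: "Q y = R" unfolding Q_def Ly R_def by (simp add: inner_commute xv)
  have "R^2 \<le> R" using quad_edge[OF G assms(2), of y] QyR unfolding Q_def R_def L_def by simp
  moreover have R0: "0 \<le> R" using Qnn QyR by metis
  ultimately have R1: "R \<le> 1"
  proof (cases "R = 0")
    case False
    assume "R^2 \<le> R" "0 \<le> R"
    then have "R * R \<le> R * 1" "0 < R" using False by (auto simp: power2_eq_square)
    then show ?thesis by (simp add: mult_le_cancel_left_pos)
  qed simp
  have yts: "y$t \<le> y$s" using R0 R_def by simp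
  define w :: "real^'n" where "w = (\<chi> v. min (max (y$v) (y$t)) (y$s))"
  have ws: "w$s = y$s" and wt: "w$t = y$t" using yts by (auto simp: w_def)
  have QwQy: "Q w \<le> Q y"
    unfolding Q_def L_def quad[OF G]
    by (intro divide_right_mono sum_mono) (auto simp: w_def clip_le[OF yts])
  define d where "d = w - y"
  have xd: "x \<bullet> d = 0" by (simp add: xv d_def ws wt)
  have "Q w = Q y + 2 * (d \<bullet> (L *v y)) + Q d"
    unfolding Q_def d_def using sym_inner[OF symL, of y "w - y"]
    by (simp add: algebra_simps inner_diff_left inner_diff_right inner_commute)
  then have "Q d = 0" using QwQy Qnn[of d] xd Ly by (simp add: inner_commute)
  then have Ld: "L *v d = 0" using quad_zero[OF G] unfolding Q_def L_def by blast
  define one :: "real^'n" where "one = (\<chi> v. 1)"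
  have L1: "L *v one = 0" by (simp add: L_def one_def vec_eq_iff lap_mv cong: if_cong)
  define w' where "w' = w - y$t *\<^sub>R one"
  define d' where "d' = w' - y"
  have Ld': "L *v d' = 0" using Ld L1
    by (simp add: d'_def w'_def d_def algebra_simps)
  have "w' = y + d'" by (simp add: d'_def)
  then have "w' \<bullet> w' = y \<bullet> y + 2 * (y \<bullet> d') + d' \<bullet> d'"
    by (simp add: algebra_simps inner_add_left inner_add_right inner_commute)
  then have yw: "y \<bullet> y \<le> w' \<bullet> w'" using orth[OF Ld'] by simp
  have "w' \<bullet> w' = (\<Sum>v\<in>UNIV. (w$v - y$t)^2)"
    by (simp add: inner_vec_def w'_def one_def power2_eq_square)
  also have "\<dots> \<le> (\<Sum>v\<in>(UNIV::'n set). 1::real)"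
  proof (rule sum_mono)
    fix v
    have "0 \<le> w$v - y$t" "w$v - y$t \<le> 1" using yts R1 R_def by (auto simp: w_def)
    then show "(w$v - y$t)^2 \<le> 1" by (simp add: abs_le_iff power_le_one)
  qed
  finally show ?thesis using B2 yw by simp
qed
end
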